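(* Let $k\ge 0$ and $l\ge 1$ be integers such that the $k$th and $(k+l)$th Hopf bifurcations are nondegenerate. Then $\mu_k(lT^k_0+1)=\mu_{k+l}$ and $\frac{T^k_0}{lT^k_0+1}=T^{k+l}_0$. Moreover, near the bifurcation points the Cooke transform $C_l$ maps the $k$th Hopf branch into the $(k+l)$th Hopf branch. That is, for all sufficiently small $\eta>0$ there exists $\eta'\in(0,\eta_{k+l})$ such that $$C_l\big(\mu_k+\delta_k\eta,\;T^k_\eta,\;p^k_\eta\big)=\big(\mu_{k+l}+\delta_{k+l}\eta',\;T^{k+l}_{\eta'},\;p^{k+l}_{\eta'}\big),$$ where the periodic solutions are identified up to a time translation.
   Context: Consider the scalar delay differential equation (1) $x'(t)=-\mu f(x(t-1))$, with real parameter $\mu$ and phase space $C([-1,0],\mathbb R)$. Here $f:\mathbb R\to\mathbb R$ is $C^3$ with $f(0)=0$ and $f'(0)=1$, so that $f(\xi)=\xi+B\xi^2+C\xi^3+o(\xi^3)$ with $B=f''(0)/2$ and $C=f'''(0)/6$. For $k\in\mathbb Z$ let $\mu_k=\frac{(4k+1)\pi}{2}$ and $H(k)=\frac{22(4k+1)\pi-8}{15(4k+1)\pi}$. The $k$th Hopf bifurcation (at $\mu_k$) is supercritical if $C<H(k)B^2$ and subcritical if $C>H(k)B^2$; it is called nondegenerate if $C\ne H(k)B^2$. Supercritical means the bifurcating small periodic orbits are stable within the center manifold; subcritical means they are unstable there. Hopf branch notation, for $k\ge0$ with a nondegenerate $k$th bifurcation: put $\delta_k=1$ if it is supercritical and $\delta_k=-1$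 if it is subcritical. There are $\eta_k>0$ and a family of nonconstant periodic solutions $p^k_\eta$, $\eta\in(0,\eta_k)$, of (1) with parameter $\mu=\mu_k+\delta_k\eta$. These bifurcate from $0$ at $\mu_k$ (amplitude $\to0$ as $\eta\to0$), and they are locally unique up to time translation. $T^k_\eta$ denotes the minimal period of $p^k_\eta$, and $T^k_\eta\to T^k_0:=\frac{4}{4k+1}$ as $\eta\to0$. Cooke transform: for $l\in\mathbb N$, $C_l(\mu_*,T,p)=\big(\mu_*(lT+1),\,\frac{T}{lT+1},\,t\mapsto p((lT+1)t)\big)$, where $p$ is a periodic solution of (1) with parameter $\mu_*>0$ and period $T$. *)

theory Defs
  imports "HOL-Analysis.Analysis"
begin

definition C3 :: "(real \<Rightarrow> real) \<Rightarrow> bool" where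
  "C3 f \<longleftrightarrow> (\<forall>n<3. (\<forall>x. (deriv ^^ n) f differentiable (at x))) \<and> continuous_on UNIV ((deriv ^^ 3) f)"

definition coefB :: "(real \<Rightarrow> real) \<Rightarrow> real" where
  "coefB f = (deriv ^^ 2) f 0 / 2"

definition coefC :: "(real \<Rightarrow> real) \<Rightarrow> real" where
  "coefC f = (deriv ^^ 3) f 0 / 6"

definition mu :: "int \<Rightarrow> real" where
  "mu k = (4 * of_int k + 1) * pi / 2"

definition Hcrit :: "int \<Rightarrow> real" where
  "Hcrit k = (22 * (4 * of_int k + 1) * pi - 8) / (15 * (4 * of_int k + 1) * pi)"

definition nondegenerate :: "(real \<Rightarrow> real) \<Rightarrow> int \<Rightarrow> bool" where
  "nondegenerate f k \<longleftrightarrow> coefC f \<noteq> Hcrit k * (coefB f)^2"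

text \<open>delta_k = 1 if supercritical (C < H(k) B^2), -1 if subcritical.\<close>
definition hopf_delta :: "(real \<Rightarrow> real) \<Rightarrow> int \<Rightarrow> real" where
  "hopf_delta f k = (if coefC f < Hcrit k * (coefB f)^2 then 1 else -1)"

definition T0 :: "int \<Rightarrow> real" where
  "T0 k = 4 / (4 * of_int k + 1)"

definition is_solution :: "(real \<Rightarrow> real) \<Rightarrow> real \<Rightarrow> (real \<Rightarrow> real) \<Rightarrow> bool" where
  "is_solution f m x \<longleftrightarrow> (\<forall>t. (x has_real_derivative (- m * f (x (t - 1)))) (at t))"

text \<open>T is the minimal period of x (this excludes constant functions).\<close>
definition min_period :: "(real \<Rightarrow> real) \<Rightarrow> real \<Rightarrow> bool" where
  "min_period x T \<longleftrightarrow> T > 0 \<and> (\<forall>t. x (t + T) = x t) \<and>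
     (\<forall>S. 0 < S \<and> S < T \<longrightarrow> \<not> (\<forall>t. x (t + S) = x t))"

definition hopf_branch :: "(real \<Rightarrow> real) \<Rightarrow> int \<Rightarrow> real \<Rightarrow> real \<Rightarrow>
    (real \<Rightarrow> real \<Rightarrow> real) \<Rightarrow> (real \<Rightarrow> real) \<Rightarrow> bool" where
  "hopf_branch f k \<delta> \<eta>k p T \<longleftrightarrow>
     \<eta>k > 0 \<and>
     (\<forall>\<eta>. 0 < \<eta> \<and> \<eta> < \<eta>k \<longrightarrow>
        is_solution f (mu k + \<delta> * \<eta>) (p \<eta>) \<and> (\<exists>t s. p \<eta> t \<noteq> p \<eta> s) \<and> min_period (p \<eta>) (T \<eta>)) \<and>
     (\<forall>e>0. eventually (\<lambda>\<eta>. \<forall>t. \<bar>p \<eta> t\<bar> < e) (at_right 0)) \<and>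
     (T \<longlongrightarrow> T0 k) (at_right 0) \<and>
     (\<exists>e>0. \<forall>m x S. is_solution f m x \<and> min_period x S \<and> \<bar>m - mu k\<bar> < e \<and>
         (\<forall>t. \<bar>x t\<bar> < e) \<and> \<bar>S - T0 k\<bar> < e \<longrightarrow>
         (\<exists>\<eta>. 0 < \<eta> \<and> \<eta> < \<eta>k \<and> m = mu k + \<delta> * \<eta> \<and> (\<exists>s. \<forall>t. x t = p \<eta> (t + s))))"

end

theory Submission
  imports Defs
begin

lemma period_nat:
  assumes "\<forall>t. x (t + T) = (x t::real)"
  shows "x (t + real n * T) = x t"
proof (induction n arbitrary: t)
  case 0 then show ?case by simp
next
  case (Suc n)
  have "x (t + real (Suc n) * T) = x ((t + real n * T) + T)" by (simp add: algebra_simps)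
  also have "\<dots> = x (t + real n * T)" using assms by blast
  finally show ?case using Suc by simp
qed

lemma min_period_unique:
  assumes "min_period x A" "min_period x B" shows "A = B"
  using assms unfolding min_period_def by (meson linorder_neqE_linordered_idom)

lemma min_period_shift:
  assumes "\<forall>t. x t = q (t + s)" "min_period q S" shows "min_period x S"
proof -
  have P: "(\<forall>t. x (t + P) = x t) \<longleftrightarrow> (\<forall>t. q (t + P) = q t)" for P
  proof
    assume h: "\<forall>t. x (t + P) = x t"
    show "\<forall>t. q (t + P) = q t"
    proof
      fix t
      have "x ((t - s) + P) = x (t - s)" using h by blast
      then show "q (t + P) = q t" using assms(1) by (simp add: algebra_simps)
    qed
  next
    assume h: "\<forall>t. q (t + P) = q t"
    show "\<forall>t. x (t + P) = x t"
      using assms(1) h by (metis add.commute add.left_commute)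
  qed
  show ?thesis using assms(2) unfolding min_period_def using P by blast
qed

lemma min_period_scale:
  assumes "min_period x T" "c > 0"
  shows "min_period (\<lambda>t. x (c * t)) (T / c)"
proof -
  have P: "(\<forall>t. x (c * (t + P)) = x (c * t)) \<longleftrightarrow> (\<forall>t. x (t + c * P) = x t)" for P
  proof
    assume h: "\<forall>t. x (c * (t + P)) = x (c * t)"
    show "\<forall>t. x (t + c * P) = x t"
    proof
      fix t
      have "x (c * (t / c + P)) = x (c * (t / c))" using h by blast
      then show "x (t + c * P) = x t" using assms(2) by (simp add: algebra_simps)
    qed
  next
    assume h: "\<forall>t. x (t + c * P) = x t"
    show "\<forall>t. x (c * (t + P)) = x (c * t)" using h by (simp add: algebra_simps)
  qed
  show ?thesis unfolding min_period_def
  proof (intro conjI allI impI)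
    show "T / c > 0" using assms unfolding min_period_def by simp
    show "x (c * (t + T / c)) = x (c * t)" for t
      using P[of "T/c"] assms unfolding min_period_def by simp
    fix Q assume "0 < Q \<and> Q < T / c"
    then have "0 < c * Q" "c * Q < T" using assms(2) by (auto simp: field_simps)
    then show "\<not> (\<forall>t. x (c * (t + Q)) = x (c * t))"
      using P[of Q] assms(1) unfolding min_period_def by blast
  qed
qed

lemma solution_cooke:
  assumes "is_solution f m x" "min_period x T" 
  shows "is_solution f (m * (real l * T + 1)) (\<lambda>t. x ((real l * T + 1) * t))"
  unfolding is_solution_def
proof
  fix t
  define c where "c = real l * T + 1"
  have d: "(x has_real_derivative (- m * f (x (c * t - 1)))) (at (c * t))"
    using assms(1) unfolding is_solution_def by blast
  have "((\<lambda>t. x (c * t)) has_real_derivative (- m * f (x (c * t - 1))) * c) (at t)"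
  proof -
    have g: "((\<lambda>t. c * t) has_real_derivative c) (at t)" using DERIV_cmult_Id[of c t] by simp
    show ?thesis using DERIV_chain2[where f=x and g="\<lambda>t. c * t" and x=t, OF d g] by simp
  qed
  moreover have "x (c * t - 1) = x (c * (t - 1))"
  proof -
    have "x (c * (t - 1) + real l * T) = x (c * (t - 1))"
      using period_nat[of x T "c * (t - 1)" l] assms(2) unfolding min_period_def by blast
    moreover have "c * (t - 1) + real l * T = c * t - 1" unfolding c_def by (simp add: algebra_simps)
    ultimately show ?thesis by simp
  qed
  ultimately show "((\<lambda>t. x (c * t)) has_real_derivative
      - (m * c) * f (x (c * (t - 1)))) (at t)" by (simp add: algebra_simps)
qed

theorem proposition1:
  fixes f :: "real \<Rightarrow> real" and k :: int and l :: nat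
    and \<eta>1 \<eta>2 :: real and p q :: "real \<Rightarrow> real \<Rightarrow> real" and T S :: "real \<Rightarrow> real"
  assumes "C3 f" and "f 0 = 0" and "deriv f 0 = 1"
    and "k \<ge> 0" and "l \<ge> 1"
    and "nondegenerate f k" and "nondegenerate f (k + int l)"
    and "hopf_branch f k (hopf_delta f k) \<eta>1 p T"
    and "hopf_branch f (k + int l) (hopf_delta f (k + int l)) \<eta>2 q S"
  shows "mu k * (real l * T0 k + 1) = mu (k + int l)
    \<and> T0 k / (real l * T0 k + 1) = T0 (k + int l)
    \<and> (\<exists>\<eta>0>0. \<eta>0 \<le> \<eta>1 \<and> (\<forall>\<eta>. 0 < \<eta> \<and> \<eta> < \<eta>0 \<longrightarrow>
         (\<exists>\<eta>'. 0 < \<eta>' \<and> \<eta>' < \<eta>2 \<and>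
            (mu k + hopf_delta f k * \<eta>) * (real l * T \<eta> + 1) = mu (k + int l) + hopf_delta f (k + int l) * \<eta>' \<and>
            T \<eta> / (real l * T \<eta> + 1) = S \<eta>' \<and>
            (\<exists>s. \<forall>t. p \<eta> ((real l * T \<eta> + 1) * t) = q \<eta>' (t + s)))))"
proof -
  define d where "d = hopf_delta f k"
  define d' where "d' = hopf_delta f (k + int l)"
  have k1: "4 * real_of_int k + 1 > 0" using assms(4) by simp
  have E1: "mu k * (real l * T0 k + 1) = mu (k + int l)"
    using k1 unfolding mu_def T0_def by (simp add: field_simps)
  have E2: "T0 k / (real l * T0 k + 1) = T0 (k + int l)"
  proof -
    define a where "a = 4 * real_of_int k + 1"
    have a: "a > 0" "a + 4 * real l > 0" using k1 unfolding a_def by simp_all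
    have "real l * T0 k + 1 = (a + 4 * real l) / a"
      using a unfolding T0_def a_def[symmetric] by (simp add: field_simps)
    then have "T0 k / (real l * T0 k + 1) = (4 / a) / ((a + 4 * real l) / a)"
      unfolding T0_def a_def by simp
    also have "\<dots> = 4 / (a + 4 * real l)" using a by simp
    also have "\<dots> = T0 (k + int l)" unfolding T0_def a_def by (simp add: algebra_simps)
    finally show ?thesis .
  qed
  from assms(8) have h1: "\<eta>1 > 0"
    and br1: "\<And>\<eta>. 0 < \<eta> \<Longrightarrow> \<eta> < \<eta>1 \<Longrightarrow> is_solution f (mu k + d * \<eta>) (p \<eta>) \<and> min_period (p \<eta>) (T \<eta>)"
    and amp: "\<And>e. e > 0 \<Longrightarrow> eventually (\<lambda>\<eta>. \<forall>t. \<bar>p \<eta> t\<bar> < e) (at_right 0)"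
    and Tlim: "(T \<longlongrightarrow> T0 k) (at_right 0)"
    unfolding hopf_branch_def d_def by blast+
  from assms(9) obtain e where e: "e > 0" and uniq: "\<And>m x S'. is_solution f m x \<Longrightarrow> min_period x S' \<Longrightarrow>
      \<bar>m - mu (k + int l)\<bar> < e \<Longrightarrow> (\<forall>t. \<bar>x t\<bar> < e) \<Longrightarrow> \<bar>S' - T0 (k + int l)\<bar> < e \<Longrightarrow>
      (\<exists>\<eta>. 0 < \<eta> \<and> \<eta> < \<eta>2 \<and> m = mu (k + int l) + d' * \<eta> \<and> (\<exists>s. \<forall>t. x t = q \<eta> (t + s)))"
    unfolding hopf_branch_def d'_def by blast
  have L1: "((\<lambda>\<eta>. (mu k + d * \<eta>) * (real l * T \<eta> + 1)) \<longlongrightarrow> (mu k + d * 0) * (real l * T0 k + 1)) (at_right 0)"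
    by (intro tendsto_intros Tlim) 
  have L2: "((\<lambda>\<eta>. T \<eta> / (real l * T \<eta> + 1)) \<longlongrightarrow> T0 k / (real l * T0 k + 1)) (at_right 0)"
  proof -
    have "real l * T0 k + 1 > 0" using k1 unfolding T0_def by (simp add: add_nonneg_pos)
    then show ?thesis by (intro tendsto_intros Tlim) simp
  qed
  have ev1: "eventually (\<lambda>\<eta>. \<bar>(mu k + d * \<eta>) * (real l * T \<eta> + 1) - mu (k + int l)\<bar> < e) (at_right 0)"
    using tendstoD[OF L1 e] E1 by (simp add: dist_real_def)
  have ev2: "eventually (\<lambda>\<eta>. \<bar>T \<eta> / (real l * T \<eta> + 1) - T0 (k + int l)\<bar> < e) (at_right 0)"
    using tendstoD[OF L2 e] E2 by (simp add: dist_real_def)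
  have ev3: "eventually (\<lambda>\<eta>. \<eta> < \<eta>1) (at_right 0)"
    using eventually_at_right_real[OF h1] by (rule eventually_mono) simp
  have "eventually (\<lambda>\<eta>. \<bar>(mu k + d * \<eta>) * (real l * T \<eta> + 1) - mu (k + int l)\<bar> < e \<and>
      \<bar>T \<eta> / (real l * T \<eta> + 1) - T0 (k + int l)\<bar> < e \<and> (\<forall>t. \<bar>p \<eta> t\<bar> < e) \<and> \<eta> < \<eta>1) (at_right 0)"
    using ev1 ev2 amp[OF e] ev3 by (intro eventually_conj)
  then obtain b where b: "b > 0" and bP: "\<And>\<eta>. 0 < \<eta> \<Longrightarrow> \<eta> < b \<Longrightarrow>
      \<bar>(mu k + d * \<eta>) * (real l * T \<eta> + 1) - mu (k + int l)\<bar> < e \<and>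
      \<bar>T \<eta> / (real l * T \<eta> + 1) - T0 (k + int l)\<bar> < e \<and> (\<forall>t. \<bar>p \<eta> t\<bar> < e) \<and> \<eta> < \<eta>1"
    unfolding eventually_at_right[OF zero_less_one] by blast
  have main: "\<exists>\<eta>'. 0 < \<eta>' \<and> \<eta>' < \<eta>2 \<and>
            (mu k + d * \<eta>) * (real l * T \<eta> + 1) = mu (k + int l) + d' * \<eta>' \<and>
            T \<eta> / (real l * T \<eta> + 1) = S \<eta>' \<and>
            (\<exists>s. \<forall>t. p \<eta> ((real l * T \<eta> + 1) * t) = q \<eta>' (t + s))"
    if "0 < \<eta>" "\<eta> < min b \<eta>1" for \<eta>
  proof -
    from bP[of \<eta>] that have A: "\<bar>(mu k + d * \<eta>) * (real l * T \<eta> + 1) - mu (k + int l)\<bar> < e"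
      "\<bar>T \<eta> / (real l * T \<eta> + 1) - T0 (k + int l)\<bar> < e" "\<forall>t. \<bar>p \<eta> t\<bar> < e" by auto
    from br1[of \<eta>] that have sol: "is_solution f (mu k + d * \<eta>) (p \<eta>)" and mp: "min_period (p \<eta>) (T \<eta>)" by auto
    have Tp: "T \<eta> > 0" using mp unfolding min_period_def by simp
    define c where "c = real l * T \<eta> + 1"
    have c: "c > 0" unfolding c_def using Tp by (simp add: add_nonneg_pos)
    define x where "x = (\<lambda>t. p \<eta> (c * t))"
    have solx: "is_solution f ((mu k + d * \<eta>) * c) x"
      unfolding x_def c_def by (rule solution_cooke[OF sol mp])
    have mpx: "min_period x (T \<eta> / c)" unfolding x_def by (rule min_period_scale[OF mp c])
    have ax: "\<forall>t. \<bar>x t\<bar> < e" unfolding x_def using A(3) by blast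
    obtain \<eta>' s where h: "0 < \<eta>'" "\<eta>' < \<eta>2" "(mu k + d * \<eta>) * c = mu (k + int l) + d' * \<eta>'"
      and sh: "\<forall>t. x t = q \<eta>' (t + s)"
      using uniq[OF solx mpx _ ax] A(1,2) unfolding c_def by blast
    from assms(9) h have "min_period (q \<eta>') (S \<eta>')" unfolding hopf_branch_def d'_def by blast
    then have "min_period x (S \<eta>')" using min_period_shift[OF sh] by blast
    then have "T \<eta> / c = S \<eta>'" using min_period_unique[OF mpx] by blast
    then show ?thesis using h sh unfolding x_def c_def by blast
  qed
  show ?thesis
    using E1 E2 main b h1 unfolding d_def d'_def
    by (intro conjI exI[of _ "min b \<eta>1"]) auto
qed

end
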